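(* Let $f:\mathbb R^n\to\mathbb R$ be a metric function. Then every gradient line of $f$ (i.e. every non-stationary trajectory of $\dot x=\operatorname{grad} f(x)$) has curvature identically zero; that is, it lies on a straight line.
   Context: A metric function on a manifold $M$ is a function $f\in C^2(M,\mathbb R)$ such that the length of its gradient $|\operatorname{grad} f|$ is constant on each connected component of each level set of $f$. A gradient line of $f$ is a trajectory of the system $\dot x=\operatorname{grad}f(x)$. *)

theory Defs
  imports "HOL-Analysis.Analysis"
begin

definition is_gradient :: "('a::euclidean_space \<Rightarrow> real) \<Rightarrow> ('a \<Rightarrow> 'a) \<Rightarrow> bool" where
  "is_gradient f g \<longleftrightarrow> (\<forall>x. (f has_derivative (\<lambda>h. g x \<bullet> h)) (at x))"

definition C2_with_gradient :: "('a::euclidean_space \<Rightarrow> real) \<Rightarrow> ('a \<Rightarrow> 'a) \<Rightarrow> bool" where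
  "C2_with_gradient f g \<longleftrightarrow> is_gradient f g \<and>
     (\<exists>H :: 'a \<Rightarrow> ('a \<Rightarrow>\<^sub>L 'a).
        (\<forall>x. (g has_derivative blinfun_apply (H x)) (at x)) \<and> continuous_on UNIV H)"

definition metric_function :: "('a::euclidean_space \<Rightarrow> real) \<Rightarrow> ('a \<Rightarrow> 'a) \<Rightarrow> bool" where
  "metric_function f g \<longleftrightarrow> C2_with_gradient f g \<and>
     (\<forall>c. \<forall>x y. x \<in> {z. f z = c} \<and> y \<in> connected_component_set {z. f z = c} x
        \<longrightarrow> norm (g y) = norm (g x))"

definition gradient_line :: "('a::euclidean_space \<Rightarrow> 'a) \<Rightarrow> real set \<Rightarrow> (real \<Rightarrow> 'a) \<Rightarrow> bool" where
  "gradient_line g I \<gamma> \<longleftrightarrow> is_interval I \<and>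
     (\<forall>t\<in>I. (\<gamma> has_vector_derivative g (\<gamma> t)) (at t within I))"

end

theory Submission
  imports Defs
begin

lemma line_deriv:
  assumes fd: "\<forall>y. (f has_derivative (\<lambda>h. g y \<bullet> h)) (at y)"
  shows "((\<lambda>r. f (p + r *\<^sub>R u)) has_real_derivative (g (p + r *\<^sub>R u) \<bullet> u)) (at r)"
proof -
  have 1: "((\<lambda>r. p + r *\<^sub>R u) has_derivative (\<lambda>h. h *\<^sub>R u)) (at r)"
    by (auto intro!: derivative_eq_intros)
  have "((\<lambda>r. f (p + r *\<^sub>R u)) has_derivative (\<lambda>h. g (p + r *\<^sub>R u) \<bullet> (h *\<^sub>R u))) (at r)"
    using has_derivative_compose[OF 1 fd[rule_format]] by (simp add: o_def)
  moreover have "(\<lambda>h. g (p + r *\<^sub>R u) \<bullet> (h *\<^sub>R u)) = (*) (g (p + r *\<^sub>R u) \<bullet> u)"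
    by (auto simp: mult.commute)
  ultimately show ?thesis by (simp add: has_field_derivative_def)
qed

lemma mixed_bound:
  fixes f :: "'a::euclidean_space \<Rightarrow> real" and g :: "'a \<Rightarrow> 'a" and H :: "'a \<Rightarrow> ('a \<Rightarrow>\<^sub>L 'a)"
  assumes fd: "\<forall>y. (f has_derivative (\<lambda>h. g y \<bullet> h)) (at y)"
    and gd: "\<forall>y. (g has_derivative blinfun_apply (H y)) (at y)"
    and Hb: "\<forall>z\<in>ball x d. norm (H z - H x) \<le> e"
    and s: "0 < s" "s * (norm u + norm w) < d"
  shows "\<bar>f (x + s *\<^sub>R w + s *\<^sub>R u) - f (x + s *\<^sub>R u) - f (x + s *\<^sub>R w) + f x
           - s\<^sup>2 * (H x w \<bullet> u)\<bar> \<le> e * s\<^sup>2 * norm u * norm w"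
proof -
  define \<phi> where "\<phi> r = f ((x + s *\<^sub>R w) + r *\<^sub>R u) - f (x + r *\<^sub>R u) - r * s * (H x w \<bullet> u)" for r
  define \<phi>' where "\<phi>' r = g ((x + s *\<^sub>R w) + r *\<^sub>R u) \<bullet> u - g (x + r *\<^sub>R u) \<bullet> u - s * (H x w \<bullet> u)" for r
  have der: "(\<phi> has_real_derivative \<phi>' r) (at r)" for r
    unfolding \<phi>_def \<phi>'_def
    by (auto intro!: derivative_eq_intros line_deriv[OF fd])
  obtain z where z: "0 < z" "z < s" "\<phi> s - \<phi> 0 = (s - 0) * \<phi>' z"
    using MVT2[of 0 s \<phi> \<phi>'] der s by auto
  have dpos: "0 < d" using s by (smt (verit, ccfv_SIG) mult_nonneg_nonneg norm_ge_zero)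
  have "norm (g (x + z *\<^sub>R u + s *\<^sub>R w) - g (x + z *\<^sub>R u) - blinfun_apply (H x) (x + z *\<^sub>R u + s *\<^sub>R w - (x + z *\<^sub>R u)))
        \<le> norm (x + z *\<^sub>R u + s *\<^sub>R w - (x + z *\<^sub>R u)) * e"
  proof (rule differentiable_bound_linearization[where S="ball x d" and f'="\<lambda>y. blinfun_apply (H y)"])
    fix t :: real assume t: "t \<in> {0..1}"
    have "norm (z *\<^sub>R u + t *\<^sub>R s *\<^sub>R w) \<le> z * norm u + t * s * norm w"
      using norm_triangle_ineq[of "z *\<^sub>R u" "t *\<^sub>R s *\<^sub>R w"] z t s by auto
    also have "\<dots> \<le> s * norm u + s * norm w"
      using z t s by (intro add_mono mult_right_mono) (auto simp: mult_le_cancel_right1 mult_left_le)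
    also have "\<dots> < d" using s by (simp add: algebra_simps)
    finally have nd: "norm (z *\<^sub>R u + t *\<^sub>R s *\<^sub>R w) < d" .
    have dd: "dist x (x + v) = norm v" for v :: 'a
    proof -
      have "x - (x + v) = - v" by simp
      then show ?thesis by (simp only: dist_norm norm_minus_cancel)
    qed
    have "x + z *\<^sub>R u + t *\<^sub>R (x + z *\<^sub>R u + s *\<^sub>R w - (x + z *\<^sub>R u)) = x + (z *\<^sub>R u + t *\<^sub>R s *\<^sub>R w)"
      by (simp add: algebra_simps)
    then show "x + z *\<^sub>R u + t *\<^sub>R (x + z *\<^sub>R u + s *\<^sub>R w - (x + z *\<^sub>R u)) \<in> ball x d"
      using nd dd by (simp only: mem_ball)
  next
    fix y assume "y \<in> ball x d"
    show "(g has_derivative blinfun_apply (H y)) (at y within ball x d)"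
      by (rule has_derivative_at_withinI[OF gd[rule_format]])
  next
    fix y assume "y \<in> ball x d"
    then show "onorm (blinfun_apply (H y) - blinfun_apply (H x)) \<le> e"
    proof -
      have "onorm (blinfun_apply (H y) - blinfun_apply (H x)) = norm (H y - H x)"
        by (simp add: norm_blinfun.rep_eq minus_blinfun.rep_eq fun_diff_def)
      then show ?thesis using Hb \<open>y \<in> ball x d\<close> by simp
    qed
  next
    show "x \<in> ball x d" using dpos by simp
  qed
  then have nb: "norm (g (x + z *\<^sub>R u + s *\<^sub>R w) - g (x + z *\<^sub>R u) - s *\<^sub>R blinfun_apply (H x) w) \<le> s * norm w * e"
    using s by (simp add: blinfun.scaleR_right)
  have "\<bar>\<phi>' z\<bar> = \<bar>(g (x + z *\<^sub>R u + s *\<^sub>R w) - g (x + z *\<^sub>R u) - s *\<^sub>R blinfun_apply (H x) w) \<bullet> u\<bar>"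
    unfolding \<phi>'_def by (simp add: algebra_simps inner_diff_left)
  also have "\<dots> \<le> norm (g (x + z *\<^sub>R u + s *\<^sub>R w) - g (x + z *\<^sub>R u) - s *\<^sub>R blinfun_apply (H x) w) * norm u"
    by (rule Cauchy_Schwarz_ineq2)
  also have "\<dots> \<le> s * norm w * e * norm u"
    by (rule mult_right_mono[OF nb]) simp
  finally have pb: "\<bar>\<phi>' z\<bar> \<le> s * norm w * e * norm u" .
  have "\<phi> s - \<phi> 0 = f (x + s *\<^sub>R w + s *\<^sub>R u) - f (x + s *\<^sub>R u) - f (x + s *\<^sub>R w) + f x
           - s\<^sup>2 * (H x w \<bullet> u)"
    unfolding \<phi>_def by (simp add: power2_eq_square)
  moreover have "\<bar>\<phi> s - \<phi> 0\<bar> \<le> e * s\<^sup>2 * norm u * norm w"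
  proof -
    have "\<bar>\<phi> s - \<phi> 0\<bar> = s * \<bar>\<phi>' z\<bar>" using z s by (simp add: abs_mult)
    also have "\<dots> \<le> s * (s * norm w * e * norm u)" using pb s by (simp add: mult_left_mono)
    finally show ?thesis by (simp add: power2_eq_square algebra_simps)
  qed
  ultimately show ?thesis by simp
qed

lemma hess_sym:
  fixes f :: "'a::euclidean_space \<Rightarrow> real" and g :: "'a \<Rightarrow> 'a" and H :: "'a \<Rightarrow> ('a \<Rightarrow>\<^sub>L 'a)"
  assumes fd: "\<forall>y. (f has_derivative (\<lambda>h. g y \<bullet> h)) (at y)"
    and gd: "\<forall>y. (g has_derivative blinfun_apply (H y)) (at y)"
    and contH: "continuous_on UNIV H"
  shows "H x w \<bullet> u = H x u \<bullet> w"
proof -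
  define A where "A = H x w \<bullet> u - H x u \<bullet> w"
  define K where "K = 2 * (norm u * norm w)"
  have K0: "K \<ge> 0" unfolding K_def by simp
  have key: "\<bar>A\<bar> \<le> e * K" if e: "e > 0" for e
  proof -
    have "isCont H x" using contH continuous_on_eq_continuous_at open_UNIV by blast
    then obtain d where d: "d > 0" "\<forall>z. dist z x < d \<longrightarrow> dist (H z) (H x) < e"
      using e unfolding continuous_at_eps_delta by blast
    have Hb: "\<forall>z\<in>ball x d. norm (H z - H x) \<le> e"
      using d by (metis dist_commute dist_norm less_imp_le mem_ball)
    define s where "s = d / (2 * (norm u + norm w + 1))"
    have s0: "0 < s" unfolding s_def using d
      by (simp add: add_nonneg_pos)
    have "s * (norm u + norm w) < s * (2 * (norm u + norm w + 1))"
    proof (rule mult_strict_left_mono[OF _ s0])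
      show "norm u + norm w < 2 * (norm u + norm w + 1)"
        by (smt (verit) norm_ge_zero)
    qed
    also have "\<dots> = d"
    proof -
      have pos: "2 * (norm u + norm w + 1) \<noteq> 0" by (smt (verit) norm_ge_zero)
      show ?thesis unfolding s_def using pos by simp
    qed
    finally have s1: "s * (norm u + norm w) < d" .
    then have s2: "s * (norm w + norm u) < d" by (simp add: add.commute)
    note b1 = mixed_bound[OF fd gd Hb s0 s1]
    note b2 = mixed_bound[OF fd gd Hb s0 s2]
    have eq: "x + s *\<^sub>R u + s *\<^sub>R w = x + s *\<^sub>R w + s *\<^sub>R u" by (simp add: algebra_simps)
    have "\<bar>s\<^sup>2 * A\<bar> \<le> e * s\<^sup>2 * norm u * norm w + e * s\<^sup>2 * norm w * norm u"
      using b1 b2 unfolding eq A_def by (simp add: algebra_simps)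
    then have "s\<^sup>2 * \<bar>A\<bar> \<le> s\<^sup>2 * (e * K)"
      unfolding K_def by (simp add: abs_mult algebra_simps)
    then show ?thesis using s0 by simp
  qed
  have "A = 0"
  proof (rule ccontr)
    assume "A \<noteq> 0"
    then have pos: "\<bar>A\<bar> > 0" by simp
    define e where "e = \<bar>A\<bar> / (2 * (K + 1))"
    have e0: "e > 0" unfolding e_def using pos K0 by simp
    have "\<bar>A\<bar> \<le> e * K" by (rule key[OF e0])
    also have "\<dots> = \<bar>A\<bar> * (K / (2 * (K + 1)))" unfolding e_def by simp
    also have "\<dots> < \<bar>A\<bar> * 1"
      using pos K0 by (intro mult_strict_left_mono) (auto simp: field_simps)
    finally show False by simp
  qed
  then show ?thesis unfolding A_def by simp
qed



lemma half_aux: "0 \<le> (n::real) \<Longrightarrow> r / (2 * (n + 1)) * (n + 1) = r / 2"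
  by (simp add: field_simps)

lemma level_tangent:
  fixes f :: "'a::euclidean_space \<Rightarrow> real" and g :: "'a \<Rightarrow> 'a" and H :: "'a \<Rightarrow> ('a \<Rightarrow>\<^sub>L 'a)"
  assumes fd: "\<forall>y. (f has_derivative (\<lambda>h. g y \<bullet> h)) (at y)"
    and gd: "\<forall>y. (g has_derivative blinfun_apply (H y)) (at y)"
    and met: "\<forall>c. \<forall>x y. x \<in> {z. f z = c} \<and> y \<in> connected_component_set {z. f z = c} x
        \<longrightarrow> norm (g y) = norm (g x)"
    and a0: "g x \<noteq> 0" and va: "v \<bullet> g x = 0"
  shows "g x \<bullet> H x v = 0"
proof -
  define a where "a = g x"
  define c where "c = f x"
  define k where "k = (a \<bullet> a) / 2"
  have k0: "k > 0" unfolding k_def a_def using a0 by simp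
  have fcont: "isCont f y" for y using fd has_derivative_continuous by blast
  have "isCont g x" using gd has_derivative_continuous by blast
  then have "isCont (\<lambda>y. g y \<bullet> a) x" by (intro continuous_intros)
  then obtain r where r: "r > 0" "\<forall>y. dist y x < r \<longrightarrow> dist (g y \<bullet> a) (g x \<bullet> a) < k"
    using k0 unfolding continuous_at_eps_delta by blast
  have gr: "g y \<bullet> a > k" if "dist y x < r" for y
  proof -
    have "\<bar>g y \<bullet> a - a \<bullet> a\<bar> < k" using r that by (simp add: a_def dist_real_def)
    then show ?thesis unfolding k_def by linarith
  qed
  define \<epsilon> where "\<epsilon> = r / (2 * (norm a + 1))"
  have \<epsilon>0: "\<epsilon> > 0" unfolding \<epsilon>_def using r by (simp add: add_nonneg_pos)
  have \<epsilon>a: "\<epsilon> * norm a < r / 2"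
  proof -
    have "\<epsilon> * norm a < \<epsilon> * (norm a + 1)" using \<epsilon>0 by simp
    also have "\<dots> = r / 2" unfolding \<epsilon>_def by (rule half_aux) simp
    finally show ?thesis .
  qed
  define \<delta>1 where "\<delta>1 = r / (2 * (norm v + 1))"
  have \<delta>10: "\<delta>1 > 0" unfolding \<delta>1_def using r by (simp add: add_nonneg_pos)
  have \<delta>1v: "\<delta>1 * norm v < r / 2"
  proof -
    have "\<delta>1 * norm v < \<delta>1 * (norm v + 1)" using \<delta>10 by simp
    also have "\<dots> = r / 2" unfolding \<delta>1_def by (rule half_aux) simp
    finally show ?thesis .
  qed
  define F where "F s t = f (x + s *\<^sub>R v + t *\<^sub>R a)" for s t
  have inr: "dist (x + s *\<^sub>R v + t *\<^sub>R a) x < r" if "\<bar>s\<bar> \<le> \<delta>1" "\<bar>t\<bar> \<le> \<epsilon>" for s t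
  proof -
    have "dist (x + s *\<^sub>R v + t *\<^sub>R a) x = norm (s *\<^sub>R v + t *\<^sub>R a)"
      by (simp add: dist_norm)
    also have "\<dots> \<le> \<bar>s\<bar> * norm v + \<bar>t\<bar> * norm a"
      using norm_triangle_ineq[of "s *\<^sub>R v" "t *\<^sub>R a"] by simp
    also have "\<dots> \<le> \<delta>1 * norm v + \<epsilon> * norm a"
      using that by (intro add_mono mult_right_mono) auto
    also have "\<dots> < r" using \<epsilon>a \<delta>1v by linarith
    finally show ?thesis .
  qed
  have Ft: "((F s) has_real_derivative (g (x + s *\<^sub>R v + t *\<^sub>R a) \<bullet> a)) (at t)" for s t
    unfolding F_def using line_deriv[OF fd, of "x + s *\<^sub>R v" a t] by simp
  have Fs: "((\<lambda>s. F s t) has_real_derivative (g (x + s *\<^sub>R v + t *\<^sub>R a) \<bullet> v)) (at s)" for s t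
  proof -
    have e: "x + s *\<^sub>R v + t *\<^sub>R a = (x + t *\<^sub>R a) + s *\<^sub>R v" for s by (simp add: algebra_simps)
    show ?thesis unfolding F_def e using line_deriv[OF fd, of "x + t *\<^sub>R a" v s] by simp
  qed
  have Fgrow: "F s t2 - F s t1 \<ge> (t2 - t1) * k"
    if "\<bar>s\<bar> \<le> \<delta>1" "-\<epsilon> \<le> t1" "t1 \<le> t2" "t2 \<le> \<epsilon>" for s t1 t2
  proof (cases "t1 = t2")
    case True then show ?thesis by simp
  next
    case False
    then have lt: "t1 < t2" using that by simp
    have "(\<lambda>t. F s t - t * k) t1 < (\<lambda>t. F s t - t * k) t2"
    proof (rule DERIV_pos_imp_increasing[OF lt])
      fix t assume t: "t1 \<le> t" "t \<le> t2"
      have "((\<lambda>t. F s t - t * k) has_real_derivative (g (x + s *\<^sub>R v + t *\<^sub>R a) \<bullet> a - k)) (at t)"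
        by (auto intro!: derivative_eq_intros Ft)
      moreover have "g (x + s *\<^sub>R v + t *\<^sub>R a) \<bullet> a - k > 0"
        using gr[OF inr[of s t]] that t by auto
      ultimately show "\<exists>y. ((\<lambda>t. F s t - t * k) has_real_derivative y) (at t) \<and> 0 < y" by blast
    qed
    then show ?thesis by (simp add: algebra_simps)
  qed
  have F00: "F 0 0 = c" unfolding F_def c_def by simp
  have Fpe: "F 0 \<epsilon> - c \<ge> \<epsilon> * k"
    using Fgrow[of 0 0 \<epsilon>] \<epsilon>0 \<delta>10 F00 by simp
  have Fme: "c - F 0 (-\<epsilon>) \<ge> \<epsilon> * k"
    using Fgrow[of 0 "-\<epsilon>" 0] \<epsilon>0 \<delta>10 F00 by simp
  have ek: "\<epsilon> * k > 0" using \<epsilon>0 k0 by simp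
  have "isCont (\<lambda>s. F s \<epsilon>) 0" using Fs DERIV_isCont by blast
  then obtain d1 where d1: "d1 > 0" "\<forall>s. dist s 0 < d1 \<longrightarrow> dist (F s \<epsilon>) (F 0 \<epsilon>) < \<epsilon> * k"
    using ek unfolding continuous_at_eps_delta by blast
  have "isCont (\<lambda>s. F s (-\<epsilon>)) 0" using Fs DERIV_isCont by blast
  then obtain d2 where d2: "d2 > 0" "\<forall>s. dist s 0 < d2 \<longrightarrow> dist (F s (-\<epsilon>)) (F 0 (-\<epsilon>)) < \<epsilon> * k"
    using ek unfolding continuous_at_eps_delta by blast
  define \<delta> where "\<delta> = min \<delta>1 (min d1 d2 / 2)"
  have \<delta>0: "\<delta> > 0" unfolding \<delta>_def using \<delta>10 d1 d2 by simp
  have sd: "\<bar>s\<bar> \<le> \<delta>1" "dist s 0 < d1" "dist s 0 < d2" if "\<bar>s\<bar> \<le> \<delta>" for s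
    using that d1 d2 unfolding \<delta>_def by (auto simp: dist_real_def)
  have Fplus: "F s \<epsilon> > c" if "\<bar>s\<bar> \<le> \<delta>" for s
    using d1(2) sd[OF that] Fpe by (auto simp: dist_real_def)
  have Fminus: "F s (-\<epsilon>) < c" if "\<bar>s\<bar> \<le> \<delta>" for s
    using d2(2) sd[OF that] Fme by (auto simp: dist_real_def)
  have ex1: "\<exists>!t. t \<in> {-\<epsilon>..\<epsilon>} \<and> F s t = c" if s: "\<bar>s\<bar> \<le> \<delta>" for s
  proof -
    have "continuous_on {-\<epsilon>..\<epsilon>} (F s)"
      using Ft DERIV_isCont continuous_at_imp_continuous_on by blast
    then obtain t where t: "-\<epsilon> \<le> t" "t \<le> \<epsilon>" "F s t = c"
      using IVT'[of "F s" "-\<epsilon>" c \<epsilon>] Fplus[OF s] Fminus[OF s] \<epsilon>0 by force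
    moreover have "t' = t" if "t' \<in> {-\<epsilon>..\<epsilon>} \<and> F s t' = c" for t'
    proof (rule ccontr)
      assume ne: "t' \<noteq> t"
      show False
      proof (cases "t' < t")
        case True
        then have "F s t - F s t' \<ge> (t - t') * k" using Fgrow[of s t' t] sd[OF s] that t by auto
        moreover have "(t - t') * k > 0" using True k0 by simp
        ultimately show False using that t by simp
      next
        case False
        then have "t < t'" using ne by simp
        then have "F s t' - F s t \<ge> (t' - t) * k" using Fgrow[of s t t'] sd[OF s] that t by auto
        moreover have "(t' - t) * k > 0" using \<open>t < t'\<close> k0 by simp
        ultimately show False using that t by simp
      qed
    qed
    ultimately show ?thesis by auto
  qed
  define \<tau> where "\<tau> s = (THE t. t \<in> {-\<epsilon>..\<epsilon>} \<and> F s t = c)" for s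
  have \<tau>: "\<tau> s \<in> {-\<epsilon>..\<epsilon>} \<and> F s (\<tau> s) = c" if "\<bar>s\<bar> \<le> \<delta>" for s
    unfolding \<tau>_def using theI'[OF ex1[OF that]] .
  have \<tau>u: "\<tau> s = t" if "\<bar>s\<bar> \<le> \<delta>" "t \<in> {-\<epsilon>..\<epsilon>}" "F s t = c" for s t
    unfolding \<tau>_def using the1_equality[OF ex1[OF that(1)]] that by blast
  have \<tau>0: "\<tau> 0 = 0" using \<tau>u[of 0 0] \<delta>0 \<epsilon>0 F00 by simp
  have \<tau>b: "\<bar>\<tau> s\<bar> * k \<le> \<bar>F s 0 - c\<bar>" if s: "\<bar>s\<bar> \<le> \<delta>" for s
  proof (cases "\<tau> s \<ge> 0")
    case True
    then have "F s (\<tau> s) - F s 0 \<ge> (\<tau> s - 0) * k"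
      using Fgrow[of s 0 "\<tau> s"] \<tau>[OF s] sd[OF s] \<epsilon>0 by auto
    then show ?thesis using \<tau>[OF s] True by simp
  next
    case False
    then have "F s 0 - F s (\<tau> s) \<ge> (0 - \<tau> s) * k"
      using Fgrow[of s "\<tau> s" 0] \<tau>[OF s] sd[OF s] \<epsilon>0 by auto
    then show ?thesis using \<tau>[OF s] False by simp
  qed
  have fcon: "continuous_on UNIV f" using fcont continuous_at_imp_continuous_on by blast
  have Fcon: "continuous_on UNIV (\<lambda>p. F (fst p) (snd p))"
    unfolding F_def
    by (rule continuous_on_compose2[OF fcon]) (auto intro!: continuous_intros)
  have graph: "(\<lambda>s. (s, \<tau> s)) ` {-\<delta>..\<delta>} = ({-\<delta>..\<delta>} \<times> {-\<epsilon>..\<epsilon>}) \<inter> {p. F (fst p) (snd p) = c}"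
  proof
    show "(\<lambda>s. (s, \<tau> s)) ` {-\<delta>..\<delta>} \<subseteq> ({-\<delta>..\<delta>} \<times> {-\<epsilon>..\<epsilon>}) \<inter> {p. F (fst p) (snd p) = c}"
      using \<tau> by auto
    show "({-\<delta>..\<delta>} \<times> {-\<epsilon>..\<epsilon>}) \<inter> {p. F (fst p) (snd p) = c} \<subseteq> (\<lambda>s. (s, \<tau> s)) ` {-\<delta>..\<delta>}"
    proof
      fix p assume p: "p \<in> ({-\<delta>..\<delta>} \<times> {-\<epsilon>..\<epsilon>}) \<inter> {p. F (fst p) (snd p) = c}"
      obtain s t where st: "p = (s, t)" by (cases p)
      from p st have s: "s \<in> {-\<delta>..\<delta>}" and "t \<in> {-\<epsilon>..\<epsilon>}" "F s t = c" by auto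
      then have "\<tau> s = t" using \<tau>u[of s t] by auto
      then show "p \<in> (\<lambda>s. (s, \<tau> s)) ` {-\<delta>..\<delta>}" using st s by force
    qed
  qed
  have clo: "closed ((\<lambda>s. (s, \<tau> s)) ` {-\<delta>..\<delta>})"
    unfolding graph
    by (intro closed_Int closed_Times closed_atLeastAtMost closed_Collect_eq Fcon continuous_on_const)
  have \<tau>con: "continuous_on {-\<delta>..\<delta>} \<tau>"
  proof (rule continuous_from_closed_graph[of "{-\<epsilon>..\<epsilon>}" \<tau> "{-\<delta>..\<delta>}"])
    show "\<tau> \<in> {-\<delta>..\<delta>} \<rightarrow> {-\<epsilon>..\<epsilon>}"
    proof
      fix s assume "s \<in> {-\<delta>..\<delta>}"
      then have "\<bar>s\<bar> \<le> \<delta>" by auto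
      then show "\<tau> s \<in> {-\<epsilon>..\<epsilon>}" using \<tau> by blast
    qed
  qed (simp_all add: clo)
  define P where "P s = x + s *\<^sub>R v + \<tau> s *\<^sub>R a" for s
  have Pcon: "continuous_on {-\<delta>..\<delta>} P"
    unfolding P_def by (intro continuous_intros \<tau>con)
  have Pconn: "connected (P ` {-\<delta>..\<delta>})"
    by (rule connected_continuous_image[OF Pcon]) simp
  have Plev: "P ` {-\<delta>..\<delta>} \<subseteq> {z. f z = c}"
    using \<tau> unfolding P_def F_def by auto
  have P0: "P 0 = x" unfolding P_def using \<tau>0 by simp
  have xin: "x \<in> P ` {-\<delta>..\<delta>}" using P0 \<delta>0 by force
  have Pcomp: "P ` {-\<delta>..\<delta>} \<subseteq> connected_component_set {z. f z = c} x"
    by (rule connected_component_maximal[OF xin Pconn Plev])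
  have hP: "g (P s) \<bullet> g (P s) = a \<bullet> a" if "\<bar>s\<bar> \<le> \<delta>" for s
  proof -
    have "s \<in> {-\<delta>..\<delta>}" using that by auto
    then have "P s \<in> connected_component_set {z. f z = c} x" using Pcomp by blast
    moreover have "x \<in> {z. f z = c}" unfolding c_def by simp
    ultimately have "norm (g (P s)) = norm (g x)" using met by blast
    then show ?thesis unfolding a_def by (simp add: dot_square_norm)
  qed
  have Fs0: "((\<lambda>s. F s 0) has_real_derivative 0) (at 0)"
    using Fs[of 0 0] va by (simp add: inner_commute)
  then have q0: "((\<lambda>s. (F s 0 - F 0 0) / (s - 0)) \<longlongrightarrow> 0) (at 0)"
    unfolding has_field_derivative_iff .
  have \<tau>der: "(\<tau> has_real_derivative 0) (at 0)"
    unfolding has_field_derivative_iff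
  proof (rule Lim_null_comparison[where g = "\<lambda>s. \<bar>(F s 0 - F 0 0) / (s - 0)\<bar> / k"])
    show "((\<lambda>s. \<bar>(F s 0 - F 0 0) / (s - 0)\<bar> / k) \<longlongrightarrow> 0) (at 0)"
      using tendsto_divide_zero[OF tendsto_rabs_zero[OF q0], of k] by simp
    show "\<forall>\<^sub>F s in at 0. norm ((\<tau> s - \<tau> 0) / (s - 0)) \<le> \<bar>(F s 0 - F 0 0) / (s - 0)\<bar> / k"
      unfolding eventually_at
    proof (intro exI[of _ \<delta>] conjI ballI impI)
      show "\<delta> > 0" by (rule \<delta>0)
      fix s :: real assume "s \<in> UNIV" and s: "s \<noteq> 0 \<and> dist s 0 < \<delta>"
      then have sd: "\<bar>s\<bar> \<le> \<delta>" by (simp add: dist_real_def)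
      have sp: "\<bar>s\<bar> > 0" using s by simp
      have "\<bar>\<tau> s\<bar> \<le> \<bar>F s 0 - c\<bar> / k" using \<tau>b[OF sd] k0 by (simp add: field_simps)
      then have "\<bar>\<tau> s\<bar> / \<bar>s\<bar> \<le> \<bar>F s 0 - c\<bar> / k / \<bar>s\<bar>"
        by (rule divide_right_mono) simp
      then show "norm ((\<tau> s - \<tau> 0) / (s - 0)) \<le> \<bar>(F s 0 - F 0 0) / (s - 0)\<bar> / k"
        using \<tau>0 F00 by (simp add: abs_divide field_simps)
    qed
  qed
  have \<tau>d: "(\<tau> has_derivative (\<lambda>h. h * 0)) (at 0)"
  proof -
    have "(\<lambda>h::real. h * 0) = (*) 0" by auto
    then show ?thesis using \<tau>der unfolding has_field_derivative_def by simp
  qed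
  have Pder: "(P has_derivative (\<lambda>h. h *\<^sub>R v)) (at 0)"
    unfolding P_def by (auto intro!: derivative_eq_intros \<tau>d)
  have hder: "((\<lambda>z. g z \<bullet> g z) has_derivative (\<lambda>w. g x \<bullet> H x w + H x w \<bullet> g x)) (at (P 0))"
    unfolding P0 by (auto intro!: derivative_eq_intros gd[rule_format])
  have comp: "((\<lambda>s. g (P s) \<bullet> g (P s)) has_derivative (\<lambda>h. g x \<bullet> H x (h *\<^sub>R v) + H x (h *\<^sub>R v) \<bullet> g x)) (at 0)"
    using has_derivative_compose[OF Pder hder] by simp
  have cst: "((\<lambda>s. a \<bullet> a) has_derivative (\<lambda>h. g x \<bullet> H x (h *\<^sub>R v) + H x (h *\<^sub>R v) \<bullet> g x)) (at 0)"
  proof (rule has_derivative_transform_within_open[OF comp open_ball[of 0 \<delta>]])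
    show "0 \<in> ball 0 \<delta>" using \<delta>0 by simp
    fix s :: real assume "s \<in> ball 0 \<delta>"
    then have "\<bar>s\<bar> \<le> \<delta>" by (simp add: dist_real_def)
    then show "g (P s) \<bullet> g (P s) = a \<bullet> a" by (rule hP)
  qed
  have "(\<lambda>h. g x \<bullet> H x (h *\<^sub>R v) + H x (h *\<^sub>R v) \<bullet> g x) = (\<lambda>h::real. 0)"
    using has_derivative_unique[OF cst has_derivative_const] .
  then have "g x \<bullet> H x (1 *\<^sub>R v) + H x (1 *\<^sub>R v) \<bullet> g x = 0" by meson
  then show ?thesis by (simp add: inner_commute)
qed



lemma gron_fwd:
  fixes q q' :: "real \<Rightarrow> real"
  assumes ab: "a \<le> b"
    and der: "\<And>t. t \<in> {a..b} \<Longrightarrow> (q has_real_derivative q' t) (at t within {a..b})"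
    and le: "\<And>t. t \<in> {a..b} \<Longrightarrow> q' t \<le> L * q t"
    and nn: "\<And>t. t \<in> {a..b} \<Longrightarrow> q t \<ge> 0"
    and qa: "q a = 0"
  shows "q b = 0"
proof -
  define r where "r t = q t * exp (- L * (t - a))" for t
  define r' where "r' t = (q' t - L * q t) * exp (- L * (t - a))" for t
  have rd: "(r has_real_derivative r' t) (at t within {a..b})" if "t \<in> {a..b}" for t
    unfolding r_def r'_def
    by (auto intro!: derivative_eq_intros der[OF that] simp: algebra_simps)
  have "\<exists>x\<in>{a..b}. r b - r a = (\<lambda>h. h * r' x) (b - a)"
  proof (rule mvt_very_simple[OF ab])
    fix x assume "a \<le> x" "x \<le> b"
    then have "(r has_real_derivative r' x) (at x within {a..b})" using rd by auto
    then show "(r has_derivative (\<lambda>h. h * r' x)) (at x within {a..b})"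
      unfolding has_field_derivative_def
    proof -
      assume h: "(r has_derivative (*) (r' x)) (at x within {a..b})"
      have "(\<lambda>h. h * r' x) = (*) (r' x)" by (rule ext) (simp add: mult.commute)
      then show ?thesis using h by simp
    qed
  qed
  then obtain x where x: "x \<in> {a..b}" "r b - r a = (b - a) * r' x" by auto
  have "r' x \<le> 0" unfolding r'_def using le[OF x(1)]
    by (simp add: mult_nonpos_nonneg)
  then have "r b \<le> 0" using x ab qa unfolding r_def
    by (simp add: mult_nonneg_nonpos)
  then have "q b \<le> 0" unfolding r_def by (simp add: mult_le_0_iff)
  then show ?thesis using nn[of b] ab by simp
qed

lemma gron_bwd:
  fixes q q' :: "real \<Rightarrow> real"
  assumes ab: "a \<le> b"
    and der: "\<And>t. t \<in> {a..b} \<Longrightarrow> (q has_real_derivative q' t) (at t within {a..b})"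
    and le: "\<And>t. t \<in> {a..b} \<Longrightarrow> - L * q t \<le> q' t"
    and nn: "\<And>t. t \<in> {a..b} \<Longrightarrow> q t \<ge> 0"
    and qb: "q b = 0"
  shows "q a = 0"
proof -
  define r where "r t = q t * exp (L * (t - b))" for t
  define r' where "r' t = (q' t + L * q t) * exp (L * (t - b))" for t
  have rd: "(r has_real_derivative r' t) (at t within {a..b})" if "t \<in> {a..b}" for t
    unfolding r_def r'_def
    by (auto intro!: derivative_eq_intros der[OF that] simp: algebra_simps)
  have "\<exists>x\<in>{a..b}. r b - r a = (\<lambda>h. h * r' x) (b - a)"
  proof (rule mvt_very_simple[OF ab])
    fix x assume "a \<le> x" "x \<le> b"
    then have "(r has_real_derivative r' x) (at x within {a..b})" using rd by auto
    then show "(r has_derivative (\<lambda>h. h * r' x)) (at x within {a..b})"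
      unfolding has_field_derivative_def
    proof -
      assume h: "(r has_derivative (*) (r' x)) (at x within {a..b})"
      have "(\<lambda>h. h * r' x) = (*) (r' x)" by (rule ext) (simp add: mult.commute)
      then show ?thesis using h by simp
    qed
  qed
  then obtain x where x: "x \<in> {a..b}" "r b - r a = (b - a) * r' x" by auto
  have "r' x \<ge> 0" unfolding r'_def using le[OF x(1)] by simp
  then have "(b - a) * r' x \<ge> 0" using ab by simp
  then have "r a \<le> 0" using x(2) qb unfolding r_def by simp
  then have "q a \<le> 0" unfolding r_def by (simp add: mult_le_0_iff)
  then show ?thesis using nn[of a] ab by simp
qed

lemma eig:
  fixes f :: "'a::euclidean_space \<Rightarrow> real" and g :: "'a \<Rightarrow> 'a" and H :: "'a \<Rightarrow> ('a \<Rightarrow>\<^sub>L 'a)"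
  assumes fd: "\<forall>y. (f has_derivative (\<lambda>h. g y \<bullet> h)) (at y)"
    and gd: "\<forall>y. (g has_derivative blinfun_apply (H y)) (at y)"
    and contH: "continuous_on UNIV H"
    and met: "\<forall>c. \<forall>x y. x \<in> {z. f z = c} \<and> y \<in> connected_component_set {z. f z = c} x
        \<longrightarrow> norm (g y) = norm (g x)"
  shows "H x (g x) = ((H x (g x) \<bullet> g x) / (g x \<bullet> g x)) *\<^sub>R g x"
proof (cases "g x = 0")
  case True then show ?thesis by (simp add: blinfun.zero_right)
next
  case False
  define \<mu> where "\<mu> = (H x (g x) \<bullet> g x) / (g x \<bullet> g x)"
  define w where "w = H x (g x) - \<mu> *\<^sub>R g x"
  have gg: "g x \<bullet> g x \<noteq> 0" using False by simp
  have wg: "w \<bullet> g x = 0" unfolding w_def \<mu>_def using gg by (simp add: inner_diff_left)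
  have "g x \<bullet> H x w = 0" by (rule level_tangent[OF fd gd met False wg])
  moreover have "H x w \<bullet> g x = H x (g x) \<bullet> w" by (rule hess_sym[OF fd gd contH])
  ultimately have hw: "H x (g x) \<bullet> w = 0" by (simp add: inner_commute)
  have "w \<bullet> w = H x (g x) \<bullet> w - \<mu> * (g x \<bullet> w)"
    unfolding w_def by (simp add: inner_diff_left inner_commute)
  then have "w \<bullet> w = 0" using hw wg by (simp add: inner_commute)
  then have "w = 0" by simp
  then show ?thesis unfolding w_def \<mu>_def by simp
qed



lemma proj_der:
  fixes G :: "real \<Rightarrow> 'a::euclidean_space"
  assumes "(G has_derivative (\<lambda>h. h *\<^sub>R D)) F"
  shows "((\<lambda>t. G t - ((G t \<bullet> u) / (u \<bullet> u)) *\<^sub>R u) has_derivative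
          (\<lambda>h. h *\<^sub>R (D - ((D \<bullet> u) / (u \<bullet> u)) *\<^sub>R u))) F"
proof -
  define p where "p y = y - ((y \<bullet> u) / (u \<bullet> u)) *\<^sub>R u" for y :: 'a
  have bl: "bounded_linear p"
  proof -
    have "bounded_linear (\<lambda>y::'a. y \<bullet> u / (u \<bullet> u))"
      by (rule bounded_linear_compose[OF bounded_linear_divide bounded_linear_inner_left])
    then show ?thesis unfolding p_def by (intro bounded_linear_intros)
  qed
  have "((\<lambda>t. p (G t)) has_derivative (\<lambda>h. p (h *\<^sub>R D))) F"
    by (rule bounded_linear.has_derivative[OF bl assms])
  moreover have "(\<lambda>h. p (h *\<^sub>R D)) = (\<lambda>h. h *\<^sub>R (D - ((D \<bullet> u) / (u \<bullet> u)) *\<^sub>R u))"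
    by (rule ext) (simp add: p_def algebra_simps)
  ultimately show ?thesis unfolding p_def by simp
qed

lemma mu_bound:
  fixes A :: "'a::euclidean_space \<Rightarrow>\<^sub>L 'a" and y :: 'a
  shows "\<bar>(A y \<bullet> y) / (y \<bullet> y)\<bar> \<le> norm A"
proof (cases "y = 0")
  case True then show ?thesis by simp
next
  case False
  have "\<bar>A y \<bullet> y\<bar> \<le> norm (A y) * norm y" by (rule Cauchy_Schwarz_ineq2)
  also have "\<dots> \<le> norm A * norm y * norm y"
    by (rule mult_right_mono[OF norm_blinfun]) simp
  finally have "\<bar>A y \<bullet> y\<bar> \<le> norm A * (y \<bullet> y)"
    by (simp add: dot_square_norm power2_eq_square mult.assoc)
  moreover have "y \<bullet> y > 0" using False by simp
  ultimately show ?thesis by (simp add: abs_divide divide_le_eq)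
qed



theorem theorem1p14:
  fixes f :: "'a::euclidean_space \<Rightarrow> real" and g :: "'a \<Rightarrow> 'a"
    and \<gamma> :: "real \<Rightarrow> 'a" and I :: "real set"
  assumes "metric_function f g"
    and "gradient_line g I \<gamma>"
    and "\<exists>t\<in>I. g (\<gamma> t) \<noteq> 0"
  shows "\<exists>p v. v \<noteq> 0 \<and> (\<forall>t\<in>I. \<exists>s::real. \<gamma> t = p + s *\<^sub>R v)"
proof -
  obtain H :: "'a \<Rightarrow> ('a \<Rightarrow>\<^sub>L 'a)" where
    fd: "\<forall>y. (f has_derivative (\<lambda>h. g y \<bullet> h)) (at y)"
    and gd: "\<forall>y. (g has_derivative blinfun_apply (H y)) (at y)"
    and contH: "continuous_on UNIV H"
    and met: "\<forall>c. \<forall>x y. x \<in> {z. f z = c} \<and> y \<in> connected_component_set {z. f z = c} x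
        \<longrightarrow> norm (g y) = norm (g x)"
    using assms(1) unfolding metric_function_def C2_with_gradient_def is_gradient_def by blast
  have isI: "is_interval I" and \<gamma>d: "\<And>t. t \<in> I \<Longrightarrow> (\<gamma> has_vector_derivative g (\<gamma> t)) (at t within I)"
    using assms(2) unfolding gradient_line_def by auto
  obtain t0 where t0: "t0 \<in> I" "g (\<gamma> t0) \<noteq> 0" using assms(3) by blast
  define u where "u = g (\<gamma> t0)"
  have uu: "u \<bullet> u > 0" using t0 unfolding u_def by simp
  define \<mu> where "\<mu> y = (H y (g y) \<bullet> g y) / (g y \<bullet> g y)" for y
  have eigs: "H y (g y) = \<mu> y *\<^sub>R g y" for y
    unfolding \<mu>_def by (rule eig[OF fd gd contH met])
  have \<mu>b: "\<bar>\<mu> y\<bar> \<le> norm (H y)" for y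
    unfolding \<mu>_def by (rule mu_bound)
  define G where "G t = g (\<gamma> t)" for t
  define P where "P t = G t - ((G t \<bullet> u) / (u \<bullet> u)) *\<^sub>R u" for t
  define q where "q t = P t \<bullet> P t" for t
  have Gd: "(G has_derivative (\<lambda>h. h *\<^sub>R (\<mu> (\<gamma> t) *\<^sub>R G t))) (at t within I)" if t: "t \<in> I" for t
  proof -
    have "(\<gamma> has_derivative (\<lambda>h. h *\<^sub>R g (\<gamma> t))) (at t within I)"
      using \<gamma>d[OF t] unfolding has_vector_derivative_def .
    from has_derivative_compose[OF this gd[rule_format]]
    have "(G has_derivative (\<lambda>h. H (\<gamma> t) (h *\<^sub>R g (\<gamma> t)))) (at t within I)"
      unfolding G_def .
    then show ?thesis using eigs[of "\<gamma> t"] by (simp add: blinfun.scaleR_right G_def)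
  qed
  have Pd: "(P has_derivative (\<lambda>h. h *\<^sub>R (\<mu> (\<gamma> t) *\<^sub>R P t))) (at t within I)" if t: "t \<in> I" for t
  proof -
    have "(P has_derivative (\<lambda>h. h *\<^sub>R (\<mu> (\<gamma> t) *\<^sub>R G t - ((\<mu> (\<gamma> t) *\<^sub>R G t \<bullet> u) / (u \<bullet> u)) *\<^sub>R u))) (at t within I)"
      unfolding P_def by (rule proj_der[OF Gd[OF t]])
    moreover have "\<mu> (\<gamma> t) *\<^sub>R G t - ((\<mu> (\<gamma> t) *\<^sub>R G t \<bullet> u) / (u \<bullet> u)) *\<^sub>R u = \<mu> (\<gamma> t) *\<^sub>R P t"
      unfolding P_def by (simp add: algebra_simps)
    ultimately show ?thesis by simp
  qed
  have qd: "(q has_real_derivative (2 * \<mu> (\<gamma> t) * q t)) (at t within I)" if t: "t \<in> I" for t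
  proof -
    have "(q has_derivative (\<lambda>h. P t \<bullet> (h *\<^sub>R (\<mu> (\<gamma> t) *\<^sub>R P t)) + (h *\<^sub>R (\<mu> (\<gamma> t) *\<^sub>R P t)) \<bullet> P t)) (at t within I)"
      unfolding q_def by (rule has_derivative_inner[OF Pd[OF t] Pd[OF t]])
    moreover have "(\<lambda>h. P t \<bullet> (h *\<^sub>R (\<mu> (\<gamma> t) *\<^sub>R P t)) + (h *\<^sub>R (\<mu> (\<gamma> t) *\<^sub>R P t)) \<bullet> P t) = (*) (2 * \<mu> (\<gamma> t) * q t)"
      by (rule ext) (simp add: q_def inner_commute algebra_simps)
    ultimately show ?thesis unfolding has_field_derivative_def by simp
  qed
  have qnn: "q t \<ge> 0" for t unfolding q_def by simp
  have qt0: "q t0 = 0" unfolding q_def P_def G_def u_def using uu u_def by simp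
  have \<gamma>con: "continuous_on I \<gamma>"
    unfolding continuous_on_eq_continuous_within
    by (intro ballI has_vector_derivative_continuous[OF \<gamma>d])
  have sub: "{a..b} \<subseteq> I" if "a \<in> I" "b \<in> I" for a b
  proof
    fix x assume "x \<in> {a..b}"
    then show "x \<in> I" using mem_is_interval_1_I[OF isI that(1) that(2)] by simp
  qed
  have bnd: "\<exists>L. \<forall>s\<in>{a..b}. \<bar>\<mu> (\<gamma> s)\<bar> \<le> L" if "a \<in> I" "b \<in> I" for a b
  proof -
    have "continuous_on {a..b} (\<lambda>s. norm (H (\<gamma> s)))"
      by (intro continuous_on_norm continuous_on_compose2[OF contH] continuous_on_subset[OF \<gamma>con sub[OF that]]) auto
    then have "compact ((\<lambda>s. norm (H (\<gamma> s))) ` {a..b})"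
      by (rule compact_continuous_image) simp
    then have "bounded ((\<lambda>s. norm (H (\<gamma> s))) ` {a..b})" by (rule compact_imp_bounded)
    then obtain B where "\<forall>y\<in>(\<lambda>s. norm (H (\<gamma> s))) ` {a..b}. norm y \<le> B" unfolding bounded_iff by blast
    then have "\<forall>s\<in>{a..b}. \<bar>\<mu> (\<gamma> s)\<bar> \<le> B" using \<mu>b order_trans by fastforce
    then show ?thesis by blast
  qed
  have qz: "q t = 0" if t: "t \<in> I" for t
  proof (cases "t0 \<le> t")
    case True
    obtain L where L: "\<forall>s\<in>{t0..t}. \<bar>\<mu> (\<gamma> s)\<bar> \<le> L" using bnd[OF t0(1) t] by blast
    show ?thesis
    proof (rule gron_fwd[OF True, where q'="\<lambda>s. 2 * \<mu> (\<gamma> s) * q s" and L="2 * L"])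
      fix s assume s: "s \<in> {t0..t}"
      then have sI: "s \<in> I" using sub[OF t0(1) t] by auto
      show "(q has_real_derivative 2 * \<mu> (\<gamma> s) * q s) (at s within {t0..t})"
        by (rule DERIV_subset[OF qd[OF sI] sub[OF t0(1) t]])
      have "\<bar>\<mu> (\<gamma> s)\<bar> \<le> L" using L s by blast
      then have "\<mu> (\<gamma> s) \<le> L" by linarith
      then have "\<mu> (\<gamma> s) * q s \<le> L * q s" using qnn[of s] by (rule mult_right_mono)
      then show "2 * \<mu> (\<gamma> s) * q s \<le> 2 * L * q s" by simp
    qed (simp_all add: qnn qt0)
  next
    case False
    then have le: "t \<le> t0" by simp
    obtain L where L: "\<forall>s\<in>{t..t0}. \<bar>\<mu> (\<gamma> s)\<bar> \<le> L" using bnd[OF t t0(1)] by blast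
    show ?thesis
    proof (rule gron_bwd[OF le, where q'="\<lambda>s. 2 * \<mu> (\<gamma> s) * q s" and L="2 * L"])
      fix s assume s: "s \<in> {t..t0}"
      then have sI: "s \<in> I" using sub[OF t t0(1)] by auto
      show "(q has_real_derivative 2 * \<mu> (\<gamma> s) * q s) (at s within {t..t0})"
        by (rule DERIV_subset[OF qd[OF sI] sub[OF t t0(1)]])
      have "\<bar>\<mu> (\<gamma> s)\<bar> \<le> L" using L s by blast
      then have "- L \<le> \<mu> (\<gamma> s)" by linarith
      then have "- L * q s \<le> \<mu> (\<gamma> s) * q s" using qnn[of s] by (rule mult_right_mono)
      then show "- (2 * L) * q s \<le> 2 * \<mu> (\<gamma> s) * q s" by (simp add: mult.commute)
    qed (simp_all add: qnn qt0)
  qed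
  have Pz: "P t = 0" if "t \<in> I" for t using qz[OF that] unfolding q_def by simp
  define \<phi> where "\<phi> t = \<gamma> t - ((\<gamma> t \<bullet> u) / (u \<bullet> u)) *\<^sub>R u" for t
  have \<phi>d: "(\<phi> has_derivative (\<lambda>h. 0)) (at t within I)" if t: "t \<in> I" for t
  proof -
    have "(\<gamma> has_derivative (\<lambda>h. h *\<^sub>R G t)) (at t within I)"
      using \<gamma>d[OF t] unfolding has_vector_derivative_def G_def .
    from proj_der[OF this, of u]
    have "(\<phi> has_derivative (\<lambda>h. h *\<^sub>R P t)) (at t within I)"
      unfolding \<phi>_def P_def .
    then show ?thesis using Pz[OF t] by simp
  qed
  obtain p where p: "\<forall>t\<in>I. \<phi> t = p"
    using has_derivative_zero_constant[OF is_interval_convex[OF isI] \<phi>d] by blast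
  show ?thesis
  proof (rule exI[of _ p], rule exI[of _ u], intro conjI ballI)
    show "u \<noteq> 0" using uu by auto
    fix t assume t: "t \<in> I"
    have "\<gamma> t = p + ((\<gamma> t \<bullet> u) / (u \<bullet> u)) *\<^sub>R u"
      using p t unfolding \<phi>_def by (metis diff_add_cancel)
    then show "\<exists>s. \<gamma> t = p + s *\<^sub>R u" by blast
  qed
qed


end
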